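(* The Lipschitz quaternionic modular group $PSL(2,\mathfrak L)$ is a subgroup of index $3$ of the Hurwitz quaternionic modular group $PSL(2,\mathfrak H)$.
   Context: $\mathbb H$ is the real quaternions. Quaternionic matrices $\begin{pmatrix}a&b\\c&d\end{pmatrix}$ act by $q\mapsto(aq+b)(cq+d)^{-1}$, and matrices differing by a nonzero real scalar are identified. Let $\Im\mathbb H(\mathbb Z)=\{b\mathbf i+c\mathbf j+d\mathbf k: b,c,d\in\mathbb Z\}$; for $\omega\in\Im\mathbb H(\mathbb Z)$ let $\tau_\omega(q)=q+\omega$ (matrix $\begin{pmatrix}1&\omega\\0&1\end{pmatrix}$), and let $T(q)=q^{-1}$ (matrix $\begin{pmatrix}0&1\\1&0\end{pmatrix}$). $PSL(2,\mathfrak L)$ is the group generated by $T$ and all $\tau_\omega$, $\omega\in\Im\mathbb H(\mathbb Z)$. The Hurwitz units are the 24 quaternions $\pm1,\pm\mathbf i,\pm\mathbf j,\pm\mathbf k,\frac12(\pm1\pm\mathbf i\pm\mathbf j\pm\mathbf k)$. For a Hurwitz unit $u$ let $D_u=\begin{pmatrix}u&0\\0&u\end{pmatrix}$, acting by $q\mapsto uqu^{-1}$; $\mathcal U(\mathfrak H)=\{D_u\}$ is a group of 12 transformations. $PSL(2,\mathfrak H)$ is the group generated by $T$, all $\tau_\omega$ ($\omega\in\Im\mathbb H(\mathbb Z)$) and $\mathcal U(\mathfrak H)$. *)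

theory Defs
  imports Complex_Main "HOL-Algebra.Generated_Groups" "HOL-Algebra.Coset"
begin

datatype quat = Quat (qre: real) (qi: real) (qj: real) (qk: real)

definition qadd :: "quat \<Rightarrow> quat \<Rightarrow> quat" where
  "qadd p q = Quat (qre p + qre q) (qi p + qi q) (qj p + qj q) (qk p + qk q)"

text \<open>Hamilton product (i^2 = j^2 = k^2 = ijk = -1).\<close>
definition qmul :: "quat \<Rightarrow> quat \<Rightarrow> quat" where
  "qmul p q = Quat
     (qre p * qre q - qi p * qi q - qj p * qj q - qk p * qk q)
     (qre p * qi q + qi p * qre q + qj p * qk q - qk p * qj q)
     (qre p * qj q - qi p * qk q + qj p * qre q + qk p * qi q)
     (qre p * qk q + qi p * qj q - qj p * qi q + qk p * qre q)"

definition qscale :: "real \<Rightarrow> quat \<Rightarrow> quat" where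
  "qscale r q = Quat (r * qre q) (r * qi q) (r * qj q) (r * qk q)"

definition q0 :: quat where "q0 = Quat 0 0 0 0"
definition q1 :: quat where "q1 = Quat 1 0 0 0"

definition ImHZ :: "quat set" where
  "ImHZ = {Quat 0 (of_int b) (of_int c) (of_int d) | b c d. True}"

definition hurwitz_units :: "quat set" where
  "hurwitz_units =
     {Quat s 0 0 0 | s. s \<in> {1, -1}} \<union> {Quat 0 s 0 0 | s. s \<in> {1, -1}} \<union>
     {Quat 0 0 s 0 | s. s \<in> {1, -1}} \<union> {Quat 0 0 0 s | s. s \<in> {1, -1}} \<union>
     {Quat a b c d | a b c d. a \<in> {1/2, -1/2} \<and> b \<in> {1/2, -1/2} \<and>
                              c \<in> {1/2, -1/2} \<and> d \<in> {1/2, -1/2}}"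

text \<open>A matrix (a b; c d) is represented as the tuple (a, b, c, d).\<close>
type_synonym qmat = "quat \<times> quat \<times> quat \<times> quat"

definition mmul :: "qmat \<Rightarrow> qmat \<Rightarrow> qmat" where
  "mmul M N = (case M of (a, b, c, d) \<Rightarrow> case N of (a', b', c', d') \<Rightarrow>
     (qadd (qmul a a') (qmul b c'), qadd (qmul a b') (qmul b d'),
      qadd (qmul c a') (qmul d c'), qadd (qmul c b') (qmul d d')))"

definition mscale :: "real \<Rightarrow> qmat \<Rightarrow> qmat" where
  "mscale r M = (case M of (a, b, c, d) \<Rightarrow> (qscale r a, qscale r b, qscale r c, qscale r d))"

definition mid :: qmat where "mid = (q1, q0, q0, q1)"

definition pclass :: "qmat \<Rightarrow> qmat set" where
  "pclass M = {N. \<exists>r::real. r \<noteq> 0 \<and> N = mscale r M}"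

definition pmul :: "qmat set \<Rightarrow> qmat set \<Rightarrow> qmat set" where
  "pmul X Y = pclass (mmul (SOME A. A \<in> X) (SOME B. B \<in> Y))"

definition PMat :: "qmat set monoid" where
  "PMat = \<lparr>carrier = range pclass, mult = pmul, one = pclass mid\<rparr>"

definition PGL :: "qmat set monoid" where
  "PGL = units_of PMat"

definition tau :: "quat \<Rightarrow> qmat" where "tau w = (q1, w, q0, q1)"
definition Tm :: qmat where "Tm = (q0, q1, q1, q0)"
definition Dm :: "quat \<Rightarrow> qmat" where "Dm u = (u, q0, q0, u)"

definition PSL2_Lipschitz :: "qmat set set" where
  "PSL2_Lipschitz = generate PGL (pclass ` ({Tm} \<union> tau ` ImHZ))"

definition PSL2_Hurwitz :: "qmat set set" where
  "PSL2_Hurwitz = generate PGL (pclass ` ({Tm} \<union> tau ` ImHZ \<union> Dm ` hurwitz_units))"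

definition PSL2H_grp :: "qmat set monoid" where
  "PSL2H_grp = PGL\<lparr>carrier := PSL2_Hurwitz\<rparr>"

end

theory Submission
  imports Defs
begin


lemma quat_eqI: "qre p = qre q \<Longrightarrow> qi p = qi q \<Longrightarrow> qj p = qj q \<Longrightarrow> qk p = qk q \<Longrightarrow> p = q"
  by (cases p; cases q) auto

instantiation quat :: ring_1
begin
definition zero_quat_def: "0 = q0"
definition one_quat_def: "1 = q1"
definition plus_quat_def: "p + q = qadd p q"
definition times_quat_def: "p * q = qmul p q"
definition uminus_quat_def: "- q = Quat (- qre q) (- qi q) (- qj q) (- qk q)"
definition minus_quat_def: "(p::quat) - q = p + - q"
instance
  by standard (auto intro!: quat_eqI simp: zero_quat_def one_quat_def plus_quat_def times_quat_def
     uminus_quat_def minus_quat_def qadd_def qmul_def q0_def q1_def algebra_simps)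
end

lemma quat_sel_simps[simp]:
  "qre (p + q) = qre p + qre q" "qi (p + q) = qi p + qi q" "qj (p + q) = qj p + qj q" "qk (p + q) = qk p + qk q"
  "qre (p * q) = qre p * qre q - qi p * qi q - qj p * qj q - qk p * qk q"
  "qi (p * q) = qre p * qi q + qi p * qre q + qj p * qk q - qk p * qj q"
  "qj (p * q) = qre p * qj q - qi p * qk q + qj p * qre q + qk p * qi q"
  "qk (p * q) = qre p * qk q + qi p * qj q - qj p * qi q + qk p * qre q"
  "qre (0::quat) = 0" "qi (0::quat) = 0" "qj (0::quat) = 0" "qk (0::quat) = 0"
  "qre (1::quat) = 1" "qi (1::quat) = 0" "qj (1::quat) = 0" "qk (1::quat) = 0"
  "qre (-q) = - qre q" "qi (-q) = - qi q" "qj (-q) = - qj q" "qk (-q) = - qk q"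
  "qre (qscale r q) = r * qre q" "qi (qscale r q) = r * qi q" "qj (qscale r q) = r * qj q" "qk (qscale r q) = r * qk q"
  by (simp_all add: zero_quat_def one_quat_def plus_quat_def times_quat_def
     uminus_quat_def qadd_def qmul_def q0_def q1_def qscale_def)

lemma qops[simp]: "qadd p q = p + q" "qmul p q = p * q" "q0 = 0" "q1 = 1"
  by (simp_all add: zero_quat_def one_quat_def plus_quat_def times_quat_def)

lemma qscale_mult1: "qscale r (p * q) = qscale r p * q"
  by (rule quat_eqI) (simp_all add: algebra_simps)
lemma qscale_mult2: "qscale r (p * q) = p * qscale r q"
  by (rule quat_eqI) (simp_all add: algebra_simps)
lemma qscale_add: "qscale r (p + q) = qscale r p + qscale r q"
  by (rule quat_eqI) (simp_all add: algebra_simps)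
lemma qscale_qscale: "qscale r (qscale s q) = qscale (r*s) q"
  by (rule quat_eqI) (simp_all add: algebra_simps)
lemma qscale_one[simp]: "qscale 1 q = q"
  by (rule quat_eqI) simp_all

lemma mmul_assoc: "mmul (mmul A B) C = mmul A (mmul B C)"
  by (cases A; cases B; cases C) (simp add: mmul_def algebra_simps)

lemma mmul_mid[simp]: "mmul mid A = A" "mmul A mid = A"
  by (cases A; simp add: mmul_def mid_def)+

lemma qscale_mult_both: "qscale r p * qscale s q = qscale (r*s) (p*q)"
  by (rule quat_eqI) (simp_all add: algebra_simps)

lemma mscale_mmul: "mmul (mscale r A) (mscale s B) = mscale (r*s) (mmul A B)"
  by (cases A; cases B) (simp add: mmul_def mscale_def qscale_mult_both qscale_add)

lemma mscale_mscale: "mscale r (mscale s A) = mscale (r*s) A"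
  by (cases A) (simp add: mscale_def qscale_qscale)

lemma mscale_one[simp]: "mscale 1 A = A"
  by (cases A) (simp add: mscale_def)

lemma pclass_self: "A \<in> pclass A"
  unfolding pclass_def by (rule CollectI, rule exI[of _ 1]) simp

lemma pclass_scale: "r \<noteq> 0 \<Longrightarrow> pclass (mscale r A) = pclass A"
proof
  assume r: "r \<noteq> 0"
  show "pclass (mscale r A) \<subseteq> pclass A"
  proof
    fix N assume "N \<in> pclass (mscale r A)"
    then obtain s where "s \<noteq> 0" "N = mscale (s*r) A" unfolding pclass_def by (auto simp: mscale_mscale)
    then show "N \<in> pclass A" using r unfolding pclass_def by (intro CollectI exI[of _ "s*r"]) simp
  qed
  show "pclass A \<subseteq> pclass (mscale r A)"
  proof
    fix N assume "N \<in> pclass A"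
    then obtain s where "s \<noteq> 0" "N = mscale s A" unfolding pclass_def by auto
    then have "s/r \<noteq> 0" "N = mscale (s/r) (mscale r A)" using r by (auto simp: mscale_mscale)
    then show "N \<in> pclass (mscale r A)" unfolding pclass_def by blast
  qed
qed

lemma pclass_eq_iff: "pclass A = pclass B \<longleftrightarrow> (\<exists>r. r \<noteq> 0 \<and> A = mscale r B)"
proof
  assume "pclass A = pclass B"
  then have "A \<in> pclass B" using pclass_self by metis
  then show "\<exists>r. r \<noteq> 0 \<and> A = mscale r B" unfolding pclass_def by auto
next
  assume "\<exists>r. r \<noteq> 0 \<and> A = mscale r B"
  then obtain r where "r \<noteq> 0" "A = mscale r B" by blast
  then show "pclass A = pclass B" using pclass_scale by simp
qed

lemma pmul_pclass[simp]: "pmul (pclass A) (pclass B) = pclass (mmul A B)"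
proof -
  have "(SOME X. X \<in> pclass A) \<in> pclass A" by (rule someI, rule pclass_self)
  then obtain r where r: "r \<noteq> 0" "(SOME X. X \<in> pclass A) = mscale r A" unfolding pclass_def by auto
  have "(SOME X. X \<in> pclass B) \<in> pclass B" by (rule someI, rule pclass_self)
  then obtain s where s: "s \<noteq> 0" "(SOME X. X \<in> pclass B) = mscale s B" unfolding pclass_def by auto
  show ?thesis unfolding pmul_def r s mscale_mmul using r s by (simp add: pclass_scale)
qed

lemma PMat_monoid: "monoid PMat"
  apply (unfold_locales)
  apply (auto simp: PMat_def mmul_assoc)
  done

lemma PGL_group: "group PGL"
  unfolding PGL_def by (rule monoid.units_group[OF PMat_monoid])

lemma mscale_mid_inj: "mscale a mid = mscale b mid \<Longrightarrow> a = b"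
  by (simp add: mid_def mscale_def qscale_def)

lemma PGL_carrier: "pclass A \<in> carrier PGL \<longleftrightarrow> (\<exists>B. mmul A B = mid \<and> mmul B A = mid)" (is "?l = ?r")
proof
  assume ?r then obtain B where B: "mmul A B = mid" "mmul B A = mid" by auto
  have "pclass B \<in> range pclass" by simp
  moreover have "pmul (pclass B) (pclass A) = pclass mid" "pmul (pclass A) (pclass B) = pclass mid" using B by simp_all
  ultimately show ?l unfolding PGL_def units_of_carrier Units_def PMat_def by (simp only: partial_object.simps monoid.simps) blast
next
  assume ?l
  then obtain Y where "Y \<in> range pclass" "pmul Y (pclass A) = pclass mid" "pmul (pclass A) Y = pclass mid"
    unfolding PGL_def units_of_carrier Units_def PMat_def by (simp only: partial_object.simps monoid.simps) blast
  moreover from \<open>Y \<in> range pclass\<close> obtain B where "Y = pclass B" by auto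
  ultimately have "pclass (mmul B A) = pclass mid" "pclass (mmul A B) = pclass mid" by auto
  then obtain r s where rs: "r \<noteq> 0" "mmul B A = mscale r mid" "s \<noteq> 0" "mmul A B = mscale s mid"
    unfolding pclass_eq_iff by auto
  have "mmul A (mscale (1/s) B) = mid" using rs
    using mscale_mmul[of 1 A "1/s" B] by (simp add: mscale_mscale)
  moreover have "mmul (mscale (1/s) B) A = mid"
  proof -
    have "mmul B (mmul A B) = mmul (mmul B A) B" by (simp add: mmul_assoc)
    hence "mscale s B = mscale r B" using rs mscale_mmul[of 1 B s mid] mscale_mmul[of r mid 1 B] by simp
    hence "mscale (1/s) (mscale s B) = mscale (1/s) (mscale r B)" by simp
    hence "B = mscale (r/s) B" using rs by (simp add: mscale_mscale)
    hence "mmul B A = mscale (r/s) (mmul B A)" using mscale_mmul[of "r/s" B 1 A] by simp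
    hence "mscale r mid = mscale (r*r/s) mid" using rs by (simp add: mscale_mscale)
    hence "r = r*r/s" by (rule mscale_mid_inj)
    hence "r = s" using rs by (simp add: field_simps)
    thus ?thesis using rs mscale_mmul[of "1/s" B 1 A] by (simp add: mscale_mscale)
  qed
  ultimately show ?r by blast
qed

lemma PGL_mult[simp]: "mult PGL = pmul" and PGL_one[simp]: "one PGL = pclass mid"
  unfolding PGL_def units_of_mult units_of_one by (simp_all add: PMat_def)



definition HUl :: "quat set" where "HUl = {Quat (1) (0) (0) (0), Quat (0) (1) (0) (0), Quat (0) (0) (1) (0), Quat (0) (0) (0) (1), Quat (-1) (0) (0) (0), Quat (0) (-1) (0) (0), Quat (0) (0) (-1) (0), Quat (0) (0) (0) (-1), Quat (1/2) (1/2) (1/2) (1/2), Quat (1/2) (1/2) (1/2) (-1/2), Quat (1/2) (1/2) (-1/2) (1/2), Quat (1/2) (1/2) (-1/2) (-1/2), Quat (1/2) (-1/2) (1/2) (1/2), Quat (1/2) (-1/2) (1/2) (-1/2), Quat (1/2) (-1/2) (-1/2) (1/2), Quat (1/2) (-1/2) (-1/2) (-1/2), Quat (-1/2) (1/2) (1/2) (1/2), Quat (-1/2) (1/2) (1/2) (-1/2), Quat (-1/2) (1/2) (-1/2) (1/2), Quat (-1/2) (1/2) (-1/2) (-1/2), Quat (-1/2) (-1/2) (1/2) (1/2), Quat (-1/2) (-1/2) (1/2) (-1/2), Quat (-1/2) (-1/2) (-1/2) (1/2), Quat (-1/2) (-1/2) (-1/2) (-1/2)}"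
definition LU :: "quat set" where "LU = {Quat (1) (0) (0) (0), Quat (0) (1) (0) (0), Quat (0) (0) (1) (0), Quat (0) (0) (0) (1), Quat (-1) (0) (0) (0), Quat (0) (-1) (0) (0), Quat (0) (0) (-1) (0), Quat (0) (0) (0) (-1)}"
definition uu :: quat where "uu = Quat (1/2) (1/2) (1/2) (1/2)"
definition qcnj :: "quat \<Rightarrow> quat" where "qcnj q = Quat (qre q) (- qi q) (- qj q) (- qk q)"

lemma Quat_mult: "Quat a b c d * Quat a' b' c' d' = Quat (a*a' - b*b' - c*c' - d*d') (a*b' + b*a' + c*d' - d*c') (a*c' - b*d' + c*a' + d*b') (a*d' + b*c' - c*b' + d*a')"
  by (rule quat_eqI) simp_all
lemma Quat_add: "Quat a b c d + Quat a' b' c' d' = Quat (a+a') (b+b') (c+c') (d+d')"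
  by (rule quat_eqI) simp_all
lemma Quat_one: "(1::quat) = Quat 1 0 0 0" by (rule quat_eqI) simp_all
lemma Quat_zero: "(0::quat) = Quat 0 0 0 0" by (rule quat_eqI) simp_all
lemma cnj_Quat: "qcnj (Quat a b c d) = Quat a (-b) (-c) (-d)" by (simp add: qcnj_def)
lemma uu2: "uu^2 = Quat (-1/2) (1/2) (1/2) (1/2)" by (simp add: power2_eq_square uu_def Quat_mult)

lemma HU_sub: "x \<in> hurwitz_units \<Longrightarrow> x \<in> HUl"
  unfolding hurwitz_units_def
  apply (simp only: mem_Collect_eq insert_iff empty_iff Un_iff)
  apply (elim exE conjE disjE)
  apply (simp_all only: )
  apply (simp_all add: HUl_def)
  done

lemma uu_HU: "uu \<in> hurwitz_units"
  unfolding hurwitz_units_def uu_def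
  apply (rule UnI2)
  apply (rule CollectI)
  apply (rule exI[of _ "1/2"])+
  apply simp
  done

lemma HUl_cases: "w \<in> HUl \<Longrightarrow> (\<And>w. w \<in> HUl \<Longrightarrow> P w) \<Longrightarrow> P w" by blast

lemma HUl_cnj: "w \<in> HUl \<Longrightarrow> qcnj w \<in> HUl"
  unfolding HUl_def
  apply (simp only: insert_iff empty_iff)
  apply (elim disjE)
  apply (simp_all add: cnj_Quat)
  done

lemma HUl_uu: "w \<in> HUl \<Longrightarrow> uu * w \<in> HUl"
  unfolding HUl_def
  apply (simp only: insert_iff empty_iff)
  apply (elim disjE)
  apply (simp_all add: uu_def Quat_mult)
  done

lemma HUl_uu2: "w \<in> HUl \<Longrightarrow> uu^2 * w \<in> HUl"
  unfolding HUl_def uu2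
  apply (simp only: insert_iff empty_iff)
  apply (elim disjE)
  apply (simp_all add: Quat_mult)
  done

lemma HUl_nrm: "w \<in> HUl \<Longrightarrow> w * qcnj w = 1 \<and> qcnj w * w = 1"
  unfolding HUl_def
  apply (simp only: insert_iff empty_iff)
  apply (elim disjE)
  apply (simp_all add: Quat_mult cnj_Quat Quat_one)
  done


lemma uu_nrm: "uu * qcnj uu = 1" "(uu^2) * qcnj (uu^2) = 1"
  unfolding uu2 by (simp_all add: uu_def cnj_Quat Quat_mult Quat_one)

lemma Dm_mult: "mmul (Dm x) (Dm y) = Dm (x*y)"
  by (simp add: mmul_def Dm_def)
lemma Dm_one: "Dm 1 = mid" by (simp add: Dm_def mid_def)
lemma Tm_Tm: "mmul Tm Tm = mid" by (simp add: mmul_def Tm_def mid_def)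
lemma tau_inv: "mmul (tau w) (tau (-w)) = mid" "mmul (tau (-w)) (tau w) = mid"
  by (simp_all add: mmul_def tau_def mid_def)
lemma Dm_Tm: "mmul (Dm v) Tm = mmul Tm (Dm v)" by (simp add: mmul_def Dm_def Tm_def)
lemma mmul_Dm: "mmul (a,b,c,d) (Dm v) = (a*v, b*v, c*v, d*v)" by (simp add: mmul_def Dm_def)
lemma mmul_Tm: "mmul (a,b,c,d) Tm = (b, a, d, c)" by (simp add: mmul_def Tm_def)
lemma mmul_tau: "mmul (a,b,c,d) (tau w) = (a, a*w + b, c, c*w + d)" by (simp add: mmul_def tau_def)

lemma ImHZ_iff: "w \<in> ImHZ \<longleftrightarrow> qre w = 0 \<and> qi w \<in> \<int> \<and> qj w \<in> \<int> \<and> qk w \<in> \<int>"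
proof
  assume "w \<in> ImHZ" then show "qre w = 0 \<and> qi w \<in> \<int> \<and> qj w \<in> \<int> \<and> qk w \<in> \<int>"
    unfolding ImHZ_def by auto
next
  assume a: "qre w = 0 \<and> qi w \<in> \<int> \<and> qj w \<in> \<int> \<and> qk w \<in> \<int>"
  then obtain b c d where "qi w = of_int b" "qj w = of_int c" "qk w = of_int d" by (meson Ints_cases)
  then have "w = Quat 0 (of_int b) (of_int c) (of_int d)" using a by (intro quat_eqI) simp_all
  then show "w \<in> ImHZ" unfolding ImHZ_def by blast
qed

lemma PGL_carrierI: "mmul A B = mid \<Longrightarrow> mmul B A = mid \<Longrightarrow> pclass A \<in> carrier PGL"
  using PGL_carrier by blast
lemma Dm_carrier: "w \<in> HUl \<Longrightarrow> pclass (Dm w) \<in> carrier PGL"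
  using HUl_nrm[of w] by (intro PGL_carrierI[of _ "Dm (qcnj w)"]) (simp_all add: Dm_mult Dm_one)
lemma Tm_carrier: "pclass Tm \<in> carrier PGL"
  using Tm_Tm by (intro PGL_carrierI[of _ Tm])
lemma tau_carrier: "pclass (tau w) \<in> carrier PGL"
  using tau_inv by (intro PGL_carrierI[of _ "tau (-w)"])

lemma gensL_carrier: "pclass ` ({Tm} \<union> tau ` ImHZ) \<subseteq> carrier PGL"
  using Tm_carrier tau_carrier by auto
lemma gensH_carrier: "pclass ` ({Tm} \<union> tau ` ImHZ \<union> Dm ` hurwitz_units) \<subseteq> carrier PGL"
  using Tm_carrier tau_carrier Dm_carrier HU_sub by auto

lemma inv_pclass: "mmul A B = mid \<Longrightarrow> mmul B A = mid \<Longrightarrow> inv\<^bsub>PGL\<^esub> (pclass A) = pclass B"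
  apply (rule group.inv_equality[OF PGL_group])
  apply simp
  apply (auto intro: PGL_carrierI)
  done

inductive_set WL :: "qmat set" where
  WL_mid: "mid \<in> WL"
| WL_T: "M \<in> WL \<Longrightarrow> mmul M Tm \<in> WL"
| WL_tau: "M \<in> WL \<Longrightarrow> w \<in> ImHZ \<Longrightarrow> mmul M (tau w) \<in> WL"

inductive_set WH :: "qmat set" where
  WH_mid: "mid \<in> WH"
| WH_T: "M \<in> WH \<Longrightarrow> mmul M Tm \<in> WH"
| WH_tau: "M \<in> WH \<Longrightarrow> w \<in> ImHZ \<Longrightarrow> mmul M (tau w) \<in> WH"
| WH_D: "M \<in> WH \<Longrightarrow> w \<in> HUl \<Longrightarrow> mmul M (Dm w) \<in> WH"

lemma WL_mult: "N \<in> WL \<Longrightarrow> M \<in> WL \<Longrightarrow> mmul M N \<in> WL"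
  by (induction N rule: WL.induct) (auto simp: mmul_assoc[symmetric] intro: WL.intros)

lemma WH_mult: "N \<in> WH \<Longrightarrow> M \<in> WH \<Longrightarrow> mmul M N \<in> WH"
  by (induction N rule: WH.induct) (auto simp: mmul_assoc[symmetric] intro: WH.intros)

lemma ImHZ_neg: "w \<in> ImHZ \<Longrightarrow> -w \<in> ImHZ" by (simp add: ImHZ_iff)

lemma L_sub: "PSL2_Lipschitz \<subseteq> pclass ` WL"
proof
  fix x assume "x \<in> PSL2_Lipschitz"
  then show "x \<in> pclass ` WL" unfolding PSL2_Lipschitz_def
  proof (induction rule: generate.induct)
    case one then show ?case using WL_mid by auto
  next
    case (incl h) then show ?case
      using WL_T[OF WL_mid] WL_tau[OF WL_mid] by auto
  next
    case (inv h)
    then consider "h = pclass Tm" | w where "w \<in> ImHZ" "h = pclass (tau w)" by auto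
    then show ?case
    proof cases
      case 1 then show ?thesis using inv_pclass[OF Tm_Tm Tm_Tm] WL_T[OF WL_mid] by auto
    next
      case 2 then show ?thesis using inv_pclass[OF tau_inv] WL_tau[OF WL_mid ImHZ_neg] by auto
    qed
  next
    case (eng h1 h2) then show ?case using WL_mult by auto
  qed
qed

lemma H_sub: "PSL2_Hurwitz \<subseteq> pclass ` WH"
proof
  fix x assume "x \<in> PSL2_Hurwitz"
  then show "x \<in> pclass ` WH" unfolding PSL2_Hurwitz_def
  proof (induction rule: generate.induct)
    case one then show ?case using WH_mid by auto
  next
    case (incl h) then show ?case
      using WH_T[OF WH_mid] WH_tau[OF WH_mid] WH_D[OF WH_mid] HU_sub by auto
  next
    case (inv h)
    then consider "h = pclass Tm" | w where "w \<in> ImHZ" "h = pclass (tau w)"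
      | w where "w \<in> HUl" "h = pclass (Dm w)" using HU_sub by blast
    then show ?case
    proof cases
      case 1 then show ?thesis using inv_pclass[OF Tm_Tm Tm_Tm] WH_T[OF WH_mid] by auto
    next
      case 2 then show ?thesis using inv_pclass[OF tau_inv] WH_tau[OF WH_mid ImHZ_neg] by auto
    next
      case 3
      then have "mmul (Dm w) (Dm (qcnj w)) = mid" "mmul (Dm (qcnj w)) (Dm w) = mid"
        using HUl_nrm[of w] by (simp_all add: Dm_mult Dm_one)
      then show ?thesis using 3 inv_pclass WH_D[OF WH_mid HUl_cnj] by fastforce
    qed
  next
    case (eng h1 h2) then show ?case using WH_mult by auto
  qed
qed

lemma WL_L: "M \<in> WL \<Longrightarrow> pclass M \<in> PSL2_Lipschitz"
proof (induction rule: WL.induct)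
  case WL_mid then show ?case unfolding PSL2_Lipschitz_def using generate.one[of PGL] by simp
next
  case (WL_T M)
  have "pclass M \<otimes>\<^bsub>PGL\<^esub> pclass Tm \<in> PSL2_Lipschitz"
    unfolding PSL2_Lipschitz_def
    by (rule generate.eng, use WL_T in \<open>simp add: PSL2_Lipschitz_def\<close>, rule generate.incl, simp)
  then show ?case by simp
next
  case (WL_tau M w)
  have "pclass M \<otimes>\<^bsub>PGL\<^esub> pclass (tau w) \<in> PSL2_Lipschitz"
    unfolding PSL2_Lipschitz_def
    by (rule generate.eng, use WL_tau in \<open>simp add: PSL2_Lipschitz_def\<close>, rule generate.incl, use WL_tau in simp)
  then show ?case by simp
qed



definition lipq :: "quat \<Rightarrow> bool" where
  "lipq q \<longleftrightarrow> qre q \<in> \<int> \<and> qi q \<in> \<int> \<and> qj q \<in> \<int> \<and> qk q \<in> \<int>"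
definition dotq :: "quat \<Rightarrow> quat \<Rightarrow> real" where
  "dotq p q = qre p * qre q + qi p * qi q + qj p * qj q + qk p * qk q"

lemma lipq_add: "lipq p \<Longrightarrow> lipq q \<Longrightarrow> lipq (p + q)"
  by (simp add: lipq_def)
lemma lipq_mult: "lipq p \<Longrightarrow> lipq q \<Longrightarrow> lipq (p * q)"
  by (simp add: lipq_def)
lemma lipq_ImHZ: "w \<in> ImHZ \<Longrightarrow> lipq w"
  by (simp add: lipq_def ImHZ_iff)

lemma dot_tau: "qre w = 0 \<Longrightarrow> dotq a (c*w + d) + dotq (a*w + b) c = dotq a d + dotq b c"
  by (simp add: dotq_def algebra_simps)

lemma WL_inv: "M \<in> WL \<Longrightarrow> (case M of (a,b,c,d) \<Rightarrow> lipq a \<and> lipq b \<and> lipq c \<and> lipq d \<and> dotq a d + dotq b c = 1)"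
proof (induction rule: WL.induct)
  case WL_mid then show ?case by (simp add: mid_def lipq_def dotq_def)
next
  case (WL_T M)
  obtain a b c d where M: "M = (a,b,c,d)" by (cases M) auto
  show ?case using WL_T by (simp add: M mmul_Tm)
next
  case (WL_tau M w)
  obtain a b c d where M: "M = (a,b,c,d)" by (cases M) auto
  have "qre w = 0" "lipq w" using WL_tau(2) by (simp_all add: ImHZ_iff lipq_ImHZ)
  then show ?case using WL_tau by (simp add: M mmul_tau dot_tau lipq_add lipq_mult)
qed

lemma uu_comm: "uu * Quat 0 x y z = Quat 0 z x y * uu"
  by (simp add: uu_def Quat_mult algebra_simps)
lemma uu2_comm: "uu^2 * Quat 0 x y z = Quat 0 y z x * uu^2"
  by (simp add: uu2 Quat_mult algebra_simps)

lemma Dm_tau: "v * w = w' * v \<Longrightarrow> mmul (Dm v) (tau w) = mmul (tau w') (Dm v)"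
  by (simp add: mmul_def Dm_def tau_def)

lemma conj_tau: "e \<in> {0,1,2::nat} \<Longrightarrow> w \<in> ImHZ \<Longrightarrow> \<exists>w'\<in>ImHZ. mmul (Dm (uu^e)) (tau w) = mmul (tau w') (Dm (uu^e))"
proof -
  assume e: "e \<in> {0,1,2::nat}" and w: "w \<in> ImHZ"
  then have w0: "w = Quat 0 (qi w) (qj w) (qk w)" by (intro quat_eqI) (simp_all add: ImHZ_iff)
  from e consider "e = 0" | "e = 1" | "e = 2" by auto
  then show ?thesis
  proof cases
    case 1 then show ?thesis using w by (intro bexI[of _ w] Dm_tau) simp_all
  next
    case 2
    have "uu * w = Quat 0 (qk w) (qi w) (qj w) * uu" by (subst w0, rule uu_comm)
    then show ?thesis using w 2 by (intro bexI[of _ "Quat 0 (qk w) (qi w) (qj w)"] Dm_tau) (simp_all add: ImHZ_iff)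
  next
    case 3
    have "uu^2 * w = Quat 0 (qj w) (qk w) (qi w) * uu^2" by (subst w0, rule uu2_comm)
    then show ?thesis using w 3 by (intro bexI[of _ "Quat 0 (qj w) (qk w) (qi w)"] Dm_tau) (simp_all add: ImHZ_iff)
  qed
qed

lemma HUl_dec: "v \<in> HUl \<Longrightarrow> \<exists>a\<in>LU. \<exists>f\<in>{0,1,2::nat}. v = a * uu^f"
  unfolding HUl_def
  apply (simp only: insert_iff empty_iff)
  apply (elim disjE)
  subgoal by (rule bexI[of _ "Quat (1) (0) (0) (0)"], rule bexI[of _ "0::nat"]) (simp_all add: LU_def uu_def power2_eq_square Quat_mult Quat_one)
  subgoal by (rule bexI[of _ "Quat (0) (1) (0) (0)"], rule bexI[of _ "0::nat"]) (simp_all add: LU_def uu_def power2_eq_square Quat_mult Quat_one)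
  subgoal by (rule bexI[of _ "Quat (0) (0) (1) (0)"], rule bexI[of _ "0::nat"]) (simp_all add: LU_def uu_def power2_eq_square Quat_mult Quat_one)
  subgoal by (rule bexI[of _ "Quat (0) (0) (0) (1)"], rule bexI[of _ "0::nat"]) (simp_all add: LU_def uu_def power2_eq_square Quat_mult Quat_one)
  subgoal by (rule bexI[of _ "Quat (-1) (0) (0) (0)"], rule bexI[of _ "0::nat"]) (simp_all add: LU_def uu_def power2_eq_square Quat_mult Quat_one)
  subgoal by (rule bexI[of _ "Quat (0) (-1) (0) (0)"], rule bexI[of _ "0::nat"]) (simp_all add: LU_def uu_def power2_eq_square Quat_mult Quat_one)
  subgoal by (rule bexI[of _ "Quat (0) (0) (-1) (0)"], rule bexI[of _ "0::nat"]) (simp_all add: LU_def uu_def power2_eq_square Quat_mult Quat_one)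
  subgoal by (rule bexI[of _ "Quat (0) (0) (0) (-1)"], rule bexI[of _ "0::nat"]) (simp_all add: LU_def uu_def power2_eq_square Quat_mult Quat_one)
  subgoal by (rule bexI[of _ "Quat (1) (0) (0) (0)"], rule bexI[of _ "1::nat"]) (simp_all add: LU_def uu_def power2_eq_square Quat_mult Quat_one)
  subgoal by (rule bexI[of _ "Quat (0) (-1) (0) (0)"], rule bexI[of _ "2::nat"]) (simp_all add: LU_def uu_def power2_eq_square Quat_mult Quat_one)
  subgoal by (rule bexI[of _ "Quat (0) (0) (0) (-1)"], rule bexI[of _ "2::nat"]) (simp_all add: LU_def uu_def power2_eq_square Quat_mult Quat_one)
  subgoal by (rule bexI[of _ "Quat (0) (0) (0) (-1)"], rule bexI[of _ "1::nat"]) (simp_all add: LU_def uu_def power2_eq_square Quat_mult Quat_one)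
  subgoal by (rule bexI[of _ "Quat (0) (0) (-1) (0)"], rule bexI[of _ "2::nat"]) (simp_all add: LU_def uu_def power2_eq_square Quat_mult Quat_one)
  subgoal by (rule bexI[of _ "Quat (0) (-1) (0) (0)"], rule bexI[of _ "1::nat"]) (simp_all add: LU_def uu_def power2_eq_square Quat_mult Quat_one)
  subgoal by (rule bexI[of _ "Quat (0) (0) (-1) (0)"], rule bexI[of _ "1::nat"]) (simp_all add: LU_def uu_def power2_eq_square Quat_mult Quat_one)
  subgoal by (rule bexI[of _ "Quat (-1) (0) (0) (0)"], rule bexI[of _ "2::nat"]) (simp_all add: LU_def uu_def power2_eq_square Quat_mult Quat_one)
  subgoal by (rule bexI[of _ "Quat (1) (0) (0) (0)"], rule bexI[of _ "2::nat"]) (simp_all add: LU_def uu_def power2_eq_square Quat_mult Quat_one)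
  subgoal by (rule bexI[of _ "Quat (0) (0) (1) (0)"], rule bexI[of _ "1::nat"]) (simp_all add: LU_def uu_def power2_eq_square Quat_mult Quat_one)
  subgoal by (rule bexI[of _ "Quat (0) (1) (0) (0)"], rule bexI[of _ "1::nat"]) (simp_all add: LU_def uu_def power2_eq_square Quat_mult Quat_one)
  subgoal by (rule bexI[of _ "Quat (0) (0) (1) (0)"], rule bexI[of _ "2::nat"]) (simp_all add: LU_def uu_def power2_eq_square Quat_mult Quat_one)
  subgoal by (rule bexI[of _ "Quat (0) (0) (0) (1)"], rule bexI[of _ "1::nat"]) (simp_all add: LU_def uu_def power2_eq_square Quat_mult Quat_one)
  subgoal by (rule bexI[of _ "Quat (0) (0) (0) (1)"], rule bexI[of _ "2::nat"]) (simp_all add: LU_def uu_def power2_eq_square Quat_mult Quat_one)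
  subgoal by (rule bexI[of _ "Quat (0) (1) (0) (0)"], rule bexI[of _ "2::nat"]) (simp_all add: LU_def uu_def power2_eq_square Quat_mult Quat_one)
  subgoal by (rule bexI[of _ "Quat (-1) (0) (0) (0)"], rule bexI[of _ "1::nat"]) (simp_all add: LU_def uu_def power2_eq_square Quat_mult Quat_one)
  subgoal by simp
  done

lemma HUl_uue: "e \<in> {0,1,2::nat} \<Longrightarrow> w \<in> HUl \<Longrightarrow> uu^e * w \<in> HUl"
  using HUl_uu HUl_uu2 by auto

definition iq :: quat where "iq = Quat 0 1 0 0"
definition jq :: quat where "jq = Quat 0 0 1 0"
definition kq :: quat where "kq = Quat 0 0 0 1"

lemma Dm_cube: "w * w = -1 \<Longrightarrow> mmul (mmul (mmul (mmul (mmul (mmul mid Tm) (tau w)) Tm) (tau w)) Tm) (tau w) = Dm w"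
  by (simp add: mmul_def Tm_def tau_def mid_def Dm_def algebra_simps)

lemma Dm_WL_unit: "w \<in> ImHZ \<Longrightarrow> w * w = -1 \<Longrightarrow> Dm w \<in> WL"
  using Dm_cube[of w] by (metis WL.intros)

lemma Dm_WL_mult: "Dm x \<in> WL \<Longrightarrow> Dm y \<in> WL \<Longrightarrow> Dm (x*y) \<in> WL"
  using WL_mult[of "Dm y" "Dm x"] by (simp add: Dm_mult)

lemma ijk_WL: "Dm iq \<in> WL" "Dm jq \<in> WL" "Dm kq \<in> WL"
  by (rule Dm_WL_unit; simp add: iq_def jq_def kq_def ImHZ_iff Quat_mult uminus_quat_def Quat_one)+

lemma Dm_WL_eq: "Dm x \<in> WL \<Longrightarrow> x = y \<Longrightarrow> Dm y \<in> WL" by simp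

lemma LU_WL: "a \<in> LU \<Longrightarrow> Dm a \<in> WL"
  unfolding LU_def
  apply (simp only: insert_iff empty_iff)
  apply (elim disjE)
  subgoal using WL_mid by (simp add: Dm_one[unfolded Quat_one])
  subgoal using ijk_WL by (simp add: iq_def)
  subgoal using ijk_WL by (simp add: jq_def)
  subgoal using ijk_WL by (simp add: kq_def)
  subgoal by (rule Dm_WL_eq[OF Dm_WL_mult[OF ijk_WL(1) ijk_WL(1)]]) (simp add: iq_def Quat_mult)
  subgoal by (rule Dm_WL_eq[OF Dm_WL_mult[OF Dm_WL_mult[OF ijk_WL(1) ijk_WL(1)] ijk_WL(1)]]) (simp add: iq_def Quat_mult)
  subgoal by (rule Dm_WL_eq[OF Dm_WL_mult[OF Dm_WL_mult[OF ijk_WL(2) ijk_WL(2)] ijk_WL(2)]]) (simp add: jq_def Quat_mult)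
  subgoal by (rule Dm_WL_eq[OF Dm_WL_mult[OF Dm_WL_mult[OF ijk_WL(3) ijk_WL(3)] ijk_WL(3)]]) (simp add: kq_def Quat_mult)
  subgoal by simp
  done

lemma WH_dec: "M \<in> WH \<Longrightarrow> \<exists>N\<in>WL. \<exists>e\<in>{0,1,2::nat}. M = mmul N (Dm (uu^e))"
proof (induction rule: WH.induct)
  case WH_mid
  show ?case by (rule bexI[of _ mid], rule bexI[of _ 0]) (simp_all add: Dm_one WL_mid)
next
  case (WH_T M)
  then obtain N e where N: "N \<in> WL" "e \<in> {0,1,2::nat}" "M = mmul N (Dm (uu^e))" by blast
  have "mmul M Tm = mmul (mmul N Tm) (Dm (uu^e))"
    by (simp add: N(3) mmul_assoc Dm_Tm)
  then show ?case using N WL_T by blast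
next
  case (WH_tau M w)
  then obtain N e where N: "N \<in> WL" "e \<in> {0,1,2::nat}" "M = mmul N (Dm (uu^e))" by blast
  obtain w' where w': "w' \<in> ImHZ" "mmul (Dm (uu^e)) (tau w) = mmul (tau w') (Dm (uu^e))"
    using conj_tau[OF N(2) WH_tau(2)] by blast
  have "mmul M (tau w) = mmul (mmul N (tau w')) (Dm (uu^e))"
    by (simp add: N(3) mmul_assoc w'(2))
  then show ?case using N w' WL_tau by blast
next
  case (WH_D M w)
  then obtain N e where N: "N \<in> WL" "e \<in> {0,1,2::nat}" "M = mmul N (Dm (uu^e))" by blast
  obtain a f where af: "a \<in> LU" "f \<in> {0,1,2::nat}" "uu^e * w = a * uu^f"
    using HUl_dec[OF HUl_uue[OF N(2) WH_D(2)]] by blast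
  have "mmul M (Dm w) = mmul (mmul N (Dm a)) (Dm (uu^f))"
    by (simp add: N(3) mmul_assoc Dm_mult af(3))
  then show ?case using af WL_mult[OF LU_WL[OF af(1)] N(1)] by blast
qed


subsection \<open>The invariant excludes the non-trivial cosets\<close>

lemma solve_q: "qscale r (x * v) = y \<Longrightarrow> v * qcnj v = 1 \<Longrightarrow> r \<noteq> 0 \<Longrightarrow> x = qscale (1/r) (y * qcnj v)"
proof -
  assume h: "qscale r (x * v) = y" "v * qcnj v = 1" "r \<noteq> 0"
  have "y * qcnj v = qscale r (x * v * qcnj v)" using h(1) by (simp add: qscale_mult1)
  also have "\<dots> = qscale r x" using h(2) by (simp add: mult.assoc)
  finally show ?thesis using h(3) by (simp add: qscale_qscale)
qed

lemma half_contra: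
  assumes "lipq (qscale s W)" "dotq (qscale s W) (qscale s W) = 1" "(qre W)^2 = 1/4" "dotq W W = 1"
  shows False
proof -
  have "dotq (qscale s W) (qscale s W) = s^2 * dotq W W" by (simp add: dotq_def power2_eq_square algebra_simps)
  then have s2: "s^2 = 1" using assms by simp
  have "s * qre W \<in> \<int>" using assms(1) by (simp add: lipq_def)
  then obtain n where n: "s * qre W = of_int n" by (meson Ints_cases)
  have "(s * qre W)^2 = 1/4" using s2 assms(3) by (simp add: power_mult_distrib)
  then have "real_of_int (4 * n^2) = 1" using n by simp
  then have "4 * n^2 = 1" by linarith
  then show False by (metis dvd_triv_left even_numeral odd_one dvd_mult2 mult.commute) 
qed

lemma uu_pow_facts: "e \<in> {0,1,2::nat} \<Longrightarrow> f \<in> {0,1,2::nat} \<Longrightarrow> e \<noteq> f \<Longrightarrow>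
  (qre (uu^e * qcnj (uu^f)))^2 = 1/4 \<and> dotq (uu^e * qcnj (uu^f)) (uu^e * qcnj (uu^f)) = 1"
  by (auto simp: uu_def power2_eq_square Quat_mult cnj_Quat dotq_def Quat_one)

lemma uu_pow_nrm: "f \<in> {0,1,2::nat} \<Longrightarrow> uu^f * qcnj (uu^f) = 1"
  apply (elim insertE)
  subgoal by (simp add: Quat_one cnj_Quat Quat_mult)
  subgoal using uu_nrm(1) by simp
  subgoal using uu_nrm(2) by simp
  subgoal by simp
  done

lemma no_WL_Dm:
  assumes "N \<in> WL" "e \<in> {0,1,2::nat}" "f \<in> {0,1,2::nat}" "e \<noteq> f"
    and "pclass (Dm (uu^e)) = pclass (mmul N (Dm (uu^f)))"
  shows False
proof -
  obtain a b c d where N: "N = (a,b,c,d)" by (cases N) auto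
  obtain r where r: "r \<noteq> 0" "Dm (uu^e) = mscale r (mmul N (Dm (uu^f)))"
    using assms(5) pclass_eq_iff by blast
  have eqs: "qscale r (a * uu^f) = uu^e" "qscale r (b * uu^f) = 0" "qscale r (d * uu^f) = uu^e"
  proof -
    have E: "Dm (uu^e) = (qscale r (a * uu^f), qscale r (b * uu^f), qscale r (c * uu^f), qscale r (d * uu^f))"
      using r(2) by (simp add: N mmul_Dm mscale_def)
    have C: "uu^e = qscale r (a * uu^f) \<and> 0 = qscale r (b * uu^f) \<and> 0 = qscale r (c * uu^f) \<and> uu^e = qscale r (d * uu^f)"
      using E[unfolded Dm_def qops(3) prod.inject] .
    show "qscale r (a * uu^f) = uu^e" using C by (metis (no_types))
    show "qscale r (b * uu^f) = 0" using C by (metis (no_types))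
    show "qscale r (d * uu^f) = uu^e" using C by (metis (no_types))
  qed
  have nv: "uu^f * qcnj (uu^f) = 1" by (rule uu_pow_nrm[OF assms(3)])
  have a: "a = qscale (1/r) (uu^e * qcnj (uu^f))" by (rule solve_q[OF eqs(1) nv r(1)])
  have d: "d = qscale (1/r) (uu^e * qcnj (uu^f))" by (rule solve_q[OF eqs(3) nv r(1)])
  have b: "b = 0" using solve_q[OF eqs(2) nv r(1)] by (simp add: qscale_def Quat_zero)
  have inv: "lipq a" "dotq a d + dotq b c = 1" using WL_inv[OF assms(1)] by (simp_all add: N)
  have "dotq a a = 1" using inv(2) a d b by (simp add: dotq_def)
  then show False using half_contra[OF inv(1)[unfolded a]] a uu_pow_facts[OF assms(2-4)] by simp
qed

lemma Hg_simps[simp]: "carrier PSL2H_grp = PSL2_Hurwitz" "mult PSL2H_grp = pmul" "one PSL2H_grp = pclass mid"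
  by (simp_all add: PSL2H_grp_def)

lemma sL: "subgroup PSL2_Lipschitz PGL"
  unfolding PSL2_Lipschitz_def by (rule group.generate_is_subgroup[OF PGL_group gensL_carrier])
lemma sH: "subgroup PSL2_Hurwitz PGL"
  unfolding PSL2_Hurwitz_def by (rule group.generate_is_subgroup[OF PGL_group gensH_carrier])
lemma LH: "PSL2_Lipschitz \<subseteq> PSL2_Hurwitz"
  unfolding PSL2_Lipschitz_def PSL2_Hurwitz_def by (rule group.mono_generate[OF PGL_group]) auto
lemma gH: "group PSL2H_grp"
  unfolding PSL2H_grp_def by (rule subgroup.subgroup_is_group[OF sH PGL_group])
lemma sLH: "subgroup PSL2_Lipschitz PSL2H_grp"
  unfolding PSL2H_grp_def by (rule group.subgroup_incl[OF PGL_group sL sH LH])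

definition dd :: "nat \<Rightarrow> qmat set" where "dd e = pclass (Dm (uu^e))"

lemma dd_H: "e \<in> {0,1,2::nat} \<Longrightarrow> dd e \<in> PSL2_Hurwitz"
proof -
  have "pclass (Dm uu) \<in> generate PGL (pclass ` ({Tm} \<union> tau ` ImHZ \<union> Dm ` hurwitz_units))"
    by (rule generate.incl) (use uu_HU in auto)
  then have d1: "dd 1 \<in> PSL2_Hurwitz" unfolding dd_def PSL2_Hurwitz_def by simp
  have d0: "dd 0 \<in> PSL2_Hurwitz" unfolding dd_def PSL2_Hurwitz_def
    using generate.one[of PGL] by (simp add: Dm_one)
  have "dd 1 \<otimes>\<^bsub>PGL\<^esub> dd 1 \<in> PSL2_Hurwitz" using d1 unfolding PSL2_Hurwitz_def by (intro generate.eng)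
  then have d2: "dd 2 \<in> PSL2_Hurwitz" by (simp add: dd_def Dm_mult power2_eq_square)
  assume "e \<in> {0,1,2::nat}" then show ?thesis using d0 d1 d2 by auto
qed

lemma L_carrier: "PSL2_Lipschitz \<subseteq> carrier PSL2H_grp" using LH by simp

lemma coset_form: "x \<in> PSL2_Hurwitz \<Longrightarrow> \<exists>e\<in>{0,1,2::nat}. PSL2_Lipschitz #>\<^bsub>PSL2H_grp\<^esub> x = PSL2_Lipschitz #>\<^bsub>PSL2H_grp\<^esub> dd e"
proof -
  assume x: "x \<in> PSL2_Hurwitz"
  then obtain M where M: "M \<in> WH" "x = pclass M" using H_sub by auto
  then obtain N e where N: "N \<in> WL" "e \<in> {0,1,2::nat}" "M = mmul N (Dm (uu^e))" using WH_dec by blast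
  have nL: "pclass N \<in> PSL2_Lipschitz" using WL_L[OF N(1)] .
  have nH: "pclass N \<in> carrier PSL2H_grp" using nL LH by auto
  have de: "dd e \<in> carrier PSL2H_grp" using dd_H[OF N(2)] by simp
  have xe: "x = pclass N \<otimes>\<^bsub>PSL2H_grp\<^esub> dd e" by (simp add: M(2) N(3) dd_def)
  have "PSL2_Lipschitz #>\<^bsub>PSL2H_grp\<^esub> x = (PSL2_Lipschitz #>\<^bsub>PSL2H_grp\<^esub> pclass N) #>\<^bsub>PSL2H_grp\<^esub> dd e"
    unfolding xe by (rule group.coset_mult_assoc[OF gH L_carrier nH de, symmetric])
  also have "\<dots> = PSL2_Lipschitz #>\<^bsub>PSL2H_grp\<^esub> dd e"
    by (simp only: group.coset_join2[OF gH nH sLH nL])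
  finally show ?thesis using N(2) by blast
qed

lemma cosets_distinct:
  assumes "e \<in> {0,1,2::nat}" "f \<in> {0,1,2::nat}" "e \<noteq> f"
  shows "PSL2_Lipschitz #>\<^bsub>PSL2H_grp\<^esub> dd e \<noteq> PSL2_Lipschitz #>\<^bsub>PSL2H_grp\<^esub> dd f"
proof
  assume eq: "PSL2_Lipschitz #>\<^bsub>PSL2H_grp\<^esub> dd e = PSL2_Lipschitz #>\<^bsub>PSL2H_grp\<^esub> dd f"
  have "dd e \<in> PSL2_Lipschitz #>\<^bsub>PSL2H_grp\<^esub> dd e"
    by (rule group.rcos_self[OF gH _ sLH]) (use dd_H[OF assms(1)] in simp)
  then have "dd e \<in> PSL2_Lipschitz #>\<^bsub>PSL2H_grp\<^esub> dd f" using eq by simp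
  then obtain l where l: "l \<in> PSL2_Lipschitz" "dd e = pmul l (dd f)" unfolding r_coset_def by auto
  then obtain N where N: "N \<in> WL" "l = pclass N" using L_sub by auto
  have "pclass (Dm (uu^e)) = pclass (mmul N (Dm (uu^f)))" using l(2) by (simp add: N(2) dd_def)
  then show False using no_WL_Dm[OF N(1) assms] by blast
qed

theorem mainTheorem4:
  shows "subgroup PSL2_Lipschitz PSL2H_grp \<and> card (rcosets\<^bsub>PSL2H_grp\<^esub> PSL2_Lipschitz) = 3"
proof
  show "subgroup PSL2_Lipschitz PSL2H_grp" by (rule sLH)
  let ?C = "\<lambda>e. PSL2_Lipschitz #>\<^bsub>PSL2H_grp\<^esub> dd e"
  have "rcosets\<^bsub>PSL2H_grp\<^esub> PSL2_Lipschitz = {?C 0, ?C 1, ?C 2}"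
  proof
    show "rcosets\<^bsub>PSL2H_grp\<^esub> PSL2_Lipschitz \<subseteq> {?C 0, ?C 1, ?C 2}"
      unfolding RCOSETS_def using coset_form by fastforce
    show "{?C 0, ?C 1, ?C 2} \<subseteq> rcosets\<^bsub>PSL2H_grp\<^esub> PSL2_Lipschitz"
      unfolding RCOSETS_def using dd_H by auto
  qed
  moreover have "?C 0 \<noteq> ?C 1" "?C 0 \<noteq> ?C 2" "?C 1 \<noteq> ?C 2" by (rule cosets_distinct; simp)+
  ultimately show "card (rcosets\<^bsub>PSL2H_grp\<^esub> PSL2_Lipschitz) = 3" by simp
qed

end
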